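(* Let $A=\mathrm{diag}(\lambda_1,\dots,\lambda_n)\in\mathbb{R}^{n\times n}$ with $\lambda_1<\lambda_2<\cdots<\lambda_n$, and let $v_0\in\mathbb{R}^n$ be a unit norm vector with $d(A,v_0)\geq 2$. Consider the iteration $$\widetilde v_{k+1}=(A-\rho_k I)v_k,\quad \rho_k=v_k^TAv_k,\qquad v_{k+1}=\widetilde v_{k+1}/\|\widetilde v_{k+1}\|,\qquad k=0,1,2,\dots.$$ Then the subsequence $\{v_{2k}\}$ converges (i.e. it has a single limit vector).
   Context: $d(A,v)$ denotes the grade of $v$ w.r.t. $A$, i.e. the degree of the monic polynomial $p$ of smallest degree with $p(A)v=0$; for diagonal $A$ with distinct diagonal entries this is the number of nonzero entries of $v$. $\|\cdot\|$ is the Euclidean norm. *)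

theory Defs
  imports "HOL-Analysis.Analysis"
begin

text \<open>Grade of v w.r.t. A: the degree of the monic polynomial p of least degree
  with p(A) v = 0, where p(A) v = A^d v + sum_{i<d} c_i A^i v.\<close>
definition grade :: "real^'n^'n \<Rightarrow> real^'n \<Rightarrow> nat" where
  "grade A v = (LEAST d. \<exists>c :: nat \<Rightarrow> real.
      (((*v) A ^^ d) v) + (\<Sum>i<d. c i *\<^sub>R (((*v) A ^^ i) v)) = 0)"

end

theory Submission
  imports Defs
begin

definition rho :: "('n::finite \<Rightarrow> real) \<Rightarrow> real^'n \<Rightarrow> real" where
  "rho lam x = (\<Sum>i\<in>UNIV. lam i * (x$i)^2)"
definition Wv :: "('n::finite \<Rightarrow> real) \<Rightarrow> real^'n \<Rightarrow> real^'n" where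
  "Wv lam x = (\<chi> i. (lam i - rho lam x) * x$i)"
definition Tm :: "('n::finite \<Rightarrow> real) \<Rightarrow> real^'n \<Rightarrow> real^'n" where
  "Tm lam x = Wv lam x /\<^sub>R norm (Wv lam x)"
definition Sv :: "('n::finite \<Rightarrow> real) \<Rightarrow> real^'n \<Rightarrow> real" where
  "Sv lam x = (\<Sum>i\<in>UNIV. (lam i - rho lam x)^2 * (x$i)^2)"

lemma nsq: "norm (x::real^'n::finite) ^ 2 = (\<Sum>i\<in>UNIV. (x$i)^2)"
  unfolding power2_norm_eq_inner inner_vec_def by (simp add: power2_eq_square)

lemma normW: "norm (Wv lam x) ^ 2 = Sv lam x"
  by (simp add: nsq Wv_def Sv_def power_mult_distrib)

lemma Sv_nonneg: "Sv lam x \<ge> 0"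
  unfolding Sv_def by (intro sum_nonneg) simp

lemma normW_eq: "norm (Wv lam x) = sqrt (Sv lam x)"
  by (metis normW norm_ge_zero real_sqrt_abs abs_of_nonneg real_sqrt_unique) 

lemma Tcomp: "Tm lam x $ i = (lam i - rho lam x) * x$i / sqrt (Sv lam x)"
proof -
  have "Tm lam x $ i = Wv lam x $ i / norm (Wv lam x)"
    by (simp add: Tm_def divide_inverse mult.commute)
  also have "\<dots> = Wv lam x $ i / sqrt (Sv lam x)" by (simp only: normW_eq)
  finally show ?thesis by (simp add: Wv_def)
qed

lemma unitT: "Sv lam x > 0 \<Longrightarrow> norm (Tm lam x) = 1"
proof -
  assume "Sv lam x > 0"
  then have "norm (Wv lam x) \<noteq> 0" using normW[of lam x] by auto
  then show ?thesis by (simp add: Tm_def)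
qed

lemma sum_rho0:
  assumes "(\<Sum>i\<in>UNIV. ((x::real^'n::finite)$i)^2) = 1"
  shows "(\<Sum>i\<in>UNIV. (lam i - rho lam x) * (x$i)^2) = 0"
proof -
  have "(\<Sum>i\<in>UNIV. (lam i - rho lam x) * (x$i)^2) = (\<Sum>i\<in>UNIV. lam i * (x$i)^2) - rho lam x * (\<Sum>i\<in>UNIV. (x$i)^2)"
    by (simp add: algebra_simps sum_subtractf sum_distrib_left)
  then show ?thesis using assms by (simp add: rho_def)
qed

lemma shift:
  assumes "(\<Sum>i\<in>UNIV. ((x::real^'n::finite)$i)^2) = 1"
  shows "(\<Sum>i\<in>UNIV. (lam i - c)^2 * (x$i)^2) = Sv lam x + (rho lam x - c)^2"
proof -
  let ?r = "rho lam x"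
  have "(\<Sum>i\<in>UNIV. (lam i - c)^2 * (x$i)^2) = (\<Sum>i\<in>UNIV. (lam i - ?r)^2 * (x$i)^2 + 2*(?r - c) * ((lam i - ?r) * (x$i)^2) + (?r - c)^2 * (x$i)^2)"
    by (rule sum.cong) (auto simp: power2_eq_square algebra_simps)
  also have "\<dots> = Sv lam x + 2*(?r - c) * (\<Sum>i\<in>UNIV. (lam i - ?r) * (x$i)^2) + (?r - c)^2 * (\<Sum>i\<in>UNIV. (x$i)^2)"
    by (simp add: sum.distrib sum_distrib_left Sv_def)
  finally show ?thesis using assms sum_rho0[OF assms] by simp
qed

lemma hankel:
  fixes x :: "real^'n::finite"
  assumes u: "(\<Sum>i\<in>UNIV. (x$i)^2) = 1" and sp: "Sv lam x > 0"
  defines "d \<equiv> (\<lambda>i. lam i - rho lam x)"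
  defines "t \<equiv> (\<Sum>i\<in>UNIV. (x$i)^2 * d i ^ 3) / Sv lam x"
  shows "Sv lam (Tm lam x) - Sv lam x =
     (\<Sum>i\<in>UNIV. (x$i)^2 * (d i ^ 2 - t * d i - Sv lam x)^2) / Sv lam x"
proof -
  define s where "s = Sv lam x"
  define m3 where "m3 = (\<Sum>i\<in>UNIV. (x$i)^2 * d i ^ 3)"
  define m4 where "m4 = (\<Sum>i\<in>UNIV. (x$i)^2 * d i ^ 4)"
  have s0: "s > 0" using sp s_def by simp
  have ssq: "sqrt s ^ 2 = s" using s0 by simp
  define y where "y = Tm lam x"
  have y2: "(y$i)^2 = d i ^ 2 * (x$i)^2 / s" for i
    using ssq by (simp add: y_def Tcomp d_def s_def power_mult_distrib power_divide)
  have m2: "(\<Sum>i\<in>UNIV. (x$i)^2 * d i ^ 2) = s"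
    by (simp add: s_def Sv_def d_def mult.commute)
  have m1: "(\<Sum>i\<in>UNIV. (x$i)^2 * d i) = 0"
    using sum_rho0[OF u, of lam] by (simp add: d_def mult.commute)
  have uy: "(\<Sum>i\<in>UNIV. (y$i)^2) = 1"
  proof -
    have "(\<Sum>i\<in>UNIV. (y$i)^2) = (\<Sum>i\<in>UNIV. (x$i)^2 * d i ^ 2) / s"
      by (simp add: y2 sum_divide_distrib mult.commute)
    then show ?thesis using m2 s0 by simp
  qed
  have sh: "(\<Sum>i\<in>UNIV. (lam i - rho lam x)^2 * (y$i)^2) = Sv lam y + (rho lam y - rho lam x)^2"
    by (rule shift[OF uy])
  have e4: "(\<Sum>i\<in>UNIV. (lam i - rho lam x)^2 * (y$i)^2) = m4 / s"
  proof -
    have "(\<Sum>i\<in>UNIV. (lam i - rho lam x)^2 * (y$i)^2) = (\<Sum>i\<in>UNIV. (x$i)^2 * d i ^ 4 / s)"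
      apply (rule sum.cong, simp) apply (subst y2) by (simp add: d_def power2_eq_square numeral_eq_Suc)
    then show ?thesis by (simp add: m4_def sum_divide_distrib)
  qed
  have e3: "rho lam y - rho lam x = m3 / s"
  proof -
    have "rho lam y - rho lam x = (\<Sum>i\<in>UNIV. lam i * (y$i)^2) - rho lam x * (\<Sum>i\<in>UNIV. (y$i)^2)"
      using uy by (simp add: rho_def)
    also have "\<dots> = (\<Sum>i\<in>UNIV. d i * (y$i)^2)"
      by (simp add: d_def algebra_simps sum_subtractf sum_distrib_left)
    also have "\<dots> = m3 / s"
      by (simp add: y2 m3_def sum_divide_distrib) (rule sum.cong, auto simp: power3_eq_cube power2_eq_square)
    finally show ?thesis .
  qed
  have lhs: "Sv lam y = m4 / s - (m3/s)^2" using sh e4 e3 by simp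
  have tt: "t = m3 / s" by (simp add: t_def m3_def s_def)
  have "(\<Sum>i\<in>UNIV. (x$i)^2 * (d i ^ 2 - t * d i - s)^2)
     = (\<Sum>i\<in>UNIV. (x$i)^2 * d i ^ 4 - (2*t) * ((x$i)^2 * d i ^ 3) + (t^2 - 2 * s) * ((x$i)^2 * d i ^ 2)
          + (2 * t * s) * ((x$i)^2 * d i) + s^2 * (x$i)^2)"
    by (rule sum.cong) (auto simp: power2_eq_square power3_eq_cube algebra_simps numeral_eq_Suc)
  also have "\<dots> = m4 - (2*t) * m3 + (t^2 - 2 * s) * s + (2 * t * s) * 0 + s^2 * 1"
    by (simp add: sum.distrib sum_subtractf sum_distrib_left[symmetric] m4_def m3_def m2 m1 u)
  finally have rhs: "(\<Sum>i\<in>UNIV. (x$i)^2 * (d i ^ 2 - t * d i - s)^2) = m4 - (2*t) * m3 + (t^2 - 2 * s) * s + s^2" by simp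
  show ?thesis unfolding y_def[symmetric] s_def[symmetric] lhs rhs unfolding tt using s0
    by (simp add: field_simps power2_eq_square)
qed

definition sup2 :: "real^'n::finite \<Rightarrow> bool" where
  "sup2 x \<longleftrightarrow> (\<forall>i j k. x$i \<noteq> 0 \<longrightarrow> x$j \<noteq> 0 \<longrightarrow> x$k \<noteq> 0 \<longrightarrow> i = j \<or> i = k \<or> j = k)"

lemma Sv_mono:
  assumes u: "(\<Sum>i\<in>UNIV. ((x::real^'n::finite)$i)^2) = 1" and sp: "Sv lam x > 0"
  shows "Sv lam (Tm lam x) \<ge> Sv lam x"
proof -
  have "(\<Sum>i\<in>UNIV. (x$i)^2 * ((lam i - rho lam x) ^ 2 - ((\<Sum>i\<in>UNIV. (x$i)^2 * (lam i - rho lam x) ^ 3) / Sv lam x) * (lam i - rho lam x) - Sv lam x)^2) / Sv lam x \<ge> 0"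
    using sp by (intro divide_nonneg_pos sum_nonneg) auto
  then show ?thesis using hankel[OF u sp] by simp
qed

lemma eq_sup2:
  assumes u: "(\<Sum>i\<in>UNIV. ((x::real^'n::finite)$i)^2) = 1" and sp: "Sv lam x > 0"
    and inj: "inj lam" and eq: "Sv lam (Tm lam x) = Sv lam x"
  shows "sup2 x"
proof -
  define d where "d = (\<lambda>i. lam i - rho lam x)"
  define t where "t = (\<Sum>i\<in>UNIV. (x$i)^2 * d i ^ 3) / Sv lam x"
  have "(\<Sum>i\<in>UNIV. (x$i)^2 * (d i ^ 2 - t * d i - Sv lam x)^2) / Sv lam x = 0"
    using hankel[OF u sp] eq by (simp add: d_def t_def)
  then have "(\<Sum>i\<in>UNIV. (x$i)^2 * (d i ^ 2 - t * d i - Sv lam x)^2) = 0" using sp by simp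
  then have z: "\<forall>i\<in>UNIV. (x$i)^2 * (d i ^ 2 - t * d i - Sv lam x)^2 = 0"
    by (subst sum_nonneg_eq_0_iff[symmetric]) auto
  have q: "x$i \<noteq> 0 \<Longrightarrow> d i ^ 2 - t * d i - Sv lam x = 0" for i
    using z by auto
  have sumt: "x$i \<noteq> 0 \<Longrightarrow> x$j \<noteq> 0 \<Longrightarrow> i \<noteq> j \<Longrightarrow> d i + d j = t" for i j
  proof -
    assume a: "x$i \<noteq> 0" "x$j \<noteq> 0" "i \<noteq> j"
    have "d i \<noteq> d j" using inj a(3) by (auto simp: d_def inj_def)
    moreover have "(d i - d j) * (d i + d j - t) = 0"
      using q[OF a(1)] q[OF a(2)] by (simp add: algebra_simps power2_eq_square)
    ultimately show ?thesis by simp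
  qed
  show ?thesis unfolding sup2_def
  proof (intro allI impI)
    fix i j k assume a: "x$i \<noteq> 0" "x$j \<noteq> 0" "x$k \<noteq> 0"
    show "i = j \<or> i = k \<or> j = k"
    proof (rule ccontr)
      assume "\<not> (i = j \<or> i = k \<or> j = k)"
      then have "i \<noteq> j" "i \<noteq> k" "j \<noteq> k" by auto
      have "d j = d k" using sumt[OF a(1) a(2) \<open>i\<noteq>j\<close>] sumt[OF a(1) a(3) \<open>i\<noteq>k\<close>] by simp
      then show False using inj \<open>j\<noteq>k\<close> by (auto simp: d_def inj_def)
    qed
  qed
qed

lemma sum2:
  fixes f :: "'n::finite \<Rightarrow> real"
  assumes "i \<noteq> j" "\<forall>k. k \<noteq> i \<and> k \<noteq> j \<longrightarrow> f k = 0"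
  shows "sum f UNIV = f i + f j"
proof -
  have "sum f UNIV = sum f {i,j}"
    by (rule sum.mono_neutral_right) (use assms in auto)
  then show ?thesis using assms by simp
qed

lemma two:
  fixes x :: "real^'n::finite"
  assumes u: "(\<Sum>k\<in>UNIV. (x$k)^2) = 1" and ij: "i \<noteq> j" and z: "\<forall>k. k \<noteq> i \<and> k \<noteq> j \<longrightarrow> x$k = 0"
  shows "(x$i)^2 + (x$j)^2 = 1"
    and "rho lam x = (x$i)^2 * lam i + (x$j)^2 * lam j"
    and "Sv lam x = (x$i)^2 * (x$j)^2 * (lam j - lam i)^2"
proof -
  show ab: "(x$i)^2 + (x$j)^2 = 1" using u sum2[OF ij, of "\<lambda>k. (x$k)^2"] z by auto
  show r: "rho lam x = (x$i)^2 * lam i + (x$j)^2 * lam j"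
    unfolding rho_def using sum2[OF ij, of "\<lambda>k. lam k * (x$k)^2"] z by (auto simp: mult.commute)
  have "Sv lam x = (lam i - rho lam x)^2 * (x$i)^2 + (lam j - rho lam x)^2 * (x$j)^2"
    unfolding Sv_def using sum2[OF ij, of "\<lambda>k. (lam k - rho lam x)^2 * (x$k)^2"] z by auto
  also have "\<dots> = (x$i)^2 * (x$j)^2 * (lam j - lam i)^2"
  proof -
    define a where "a = (x$i)^2"
    have b: "(x$j)^2 = 1 - a" using ab a_def by simp
    have r': "rho lam x = a * lam i + (1 - a) * lam j" using r b a_def by simp
    show ?thesis unfolding a_def[symmetric] b r'
      by (simp add: power2_eq_square algebra_simps)
  qed
  finally show "Sv lam x = (x$i)^2 * (x$j)^2 * (lam j - lam i)^2" .
qed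

lemma two_T:
  fixes x :: "real^'n::finite"
  assumes u: "(\<Sum>k\<in>UNIV. (x$k)^2) = 1" and ij: "i \<noteq> j" and z: "\<forall>k. k \<noteq> i \<and> k \<noteq> j \<longrightarrow> x$k = 0"
    and sp: "Sv lam x > 0"
  shows "Tm lam x $ i = - ((x$j)^2) * (lam j - lam i) * x$i / sqrt (Sv lam x)"
    and "Tm lam x $ j = (x$i)^2 * (lam j - lam i) * x$j / sqrt (Sv lam x)"
    and "\<forall>k. k \<noteq> i \<and> k \<noteq> j \<longrightarrow> Tm lam x $ k = 0"
proof -
  define a where "a = (x$i)^2"
  have b: "(x$j)^2 = 1 - a" using two(1)[OF u ij z] a_def by simp
  have r': "rho lam x = a * lam i + (1 - a) * lam j" using two(2)[OF u ij z, of lam] b a_def by simp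
  show "Tm lam x $ i = - ((x$j)^2) * (lam j - lam i) * x$i / sqrt (Sv lam x)"
    unfolding Tcomp b r' by (simp add: algebra_simps)
  show "Tm lam x $ j = (x$i)^2 * (lam j - lam i) * x$j / sqrt (Sv lam x)"
    unfolding Tcomp a_def[symmetric] r' by (simp add: algebra_simps)
  show "\<forall>k. k \<noteq> i \<and> k \<noteq> j \<longrightarrow> Tm lam x $ k = 0"
    using z by (simp add: Tcomp)
qed

lemma two_TT:
  fixes x :: "real^'n::finite"
  assumes u: "(\<Sum>k\<in>UNIV. (x$k)^2) = 1" and ij: "i \<noteq> j" and z: "\<forall>k. k \<noteq> i \<and> k \<noteq> j \<longrightarrow> x$k = 0"
    and sp: "Sv lam x > 0"
  shows "Tm lam (Tm lam x) = x"
proof -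
  define y where "y = Tm lam x"
  define a where "a = (x$i)^2"
  define b where "b = (x$j)^2"
  define D where "D = lam j - lam i"
  define s where "s = Sv lam x"
  have s: "s = a * b * D^2" using two(3)[OF u ij z, of lam] by (simp add: a_def b_def D_def s_def)
  have s0: "s > 0" using sp s_def by simp
  have ss: "sqrt s * sqrt s = s" using s0 by simp
  have nz: "a \<noteq> 0" "b \<noteq> 0" "D \<noteq> 0" using s0 s by auto
  have yi: "y$i = - b * D * x$i / sqrt s" using two_T(1)[OF u ij z sp] by (simp add: y_def b_def D_def s_def)
  have yj: "y$j = a * D * x$j / sqrt s" using two_T(2)[OF u ij z sp] by (simp add: y_def a_def D_def s_def)
  have yz: "\<forall>k. k \<noteq> i \<and> k \<noteq> j \<longrightarrow> y$k = 0" using two_T(3)[OF u ij z sp] by (simp add: y_def)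
  have uy: "(\<Sum>k\<in>UNIV. (y$k)^2) = 1" using unitT[OF sp] nsq[of "Tm lam x"] by (simp add: y_def)
  have yi2: "(y$i)^2 = b"
  proof -
    have "(y$i)^2 = b^2 * D^2 * a / s" unfolding yi using s0
      by (simp add: power_divide power_mult_distrib a_def power2_eq_square)
    then show ?thesis using s nz by (simp add: power2_eq_square)
  qed
  have yj2: "(y$j)^2 = a"
  proof -
    have "(y$j)^2 = a^2 * D^2 * b / s" unfolding yj using s0
      by (simp add: power_divide power_mult_distrib b_def power2_eq_square)
    then show ?thesis using s nz by (simp add: power2_eq_square)
  qed
  have sy: "Sv lam y = s" using two(3)[OF uy ij yz, of lam] yi2 yj2 s by (simp add: D_def)
  have syp: "Sv lam y > 0" using sy s0 by simp
  show ?thesis unfolding y_def[symmetric]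
  proof (rule vec_eq_iff[THEN iffD2], rule allI)
    fix k
    show "Tm lam y $ k = x $ k"
    proof (cases "k = i \<or> k = j")
      case True
      then show ?thesis
      proof
        assume k: "k = i"
        have "Tm lam y $ i = - a * D * (- b * D * x$i / sqrt s) / sqrt s"
          using two_T(1)[OF uy ij yz syp] yi yj2 sy by (simp add: D_def)
        also have "\<dots> = a * b * D^2 * x$i / (sqrt s * sqrt s)" by (simp add: power2_eq_square)
        also have "\<dots> = x$i" using ss s nz by simp
        finally show ?thesis using k by simp
      next
        assume k: "k = j"
        have "Tm lam y $ j = b * D * (a * D * x$j / sqrt s) / sqrt s"
          using two_T(2)[OF uy ij yz syp] yj yi2 sy by (simp add: D_def)
        also have "\<dots> = a * b * D^2 * x$j / (sqrt s * sqrt s)" by (simp add: power2_eq_square)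
        also have "\<dots> = x$j" using ss s nz by simp
        finally show ?thesis using k by simp
      qed
    next
      case False
      then show ?thesis using two_T(3)[OF uy ij yz syp] z by auto
    qed
  qed
qed

lemma single:
  fixes x :: "real^'n::finite"
  assumes u: "(\<Sum>k\<in>UNIV. (x$k)^2) = 1" and z: "\<forall>k. k \<noteq> i \<longrightarrow> x$k = 0"
  shows "Sv lam x = 0"
proof -
  have s1: "sum f UNIV = f i" if "\<forall>k. k \<noteq> i \<longrightarrow> f k = 0" for f :: "'n \<Rightarrow> real"
  proof -
    have "sum f UNIV = sum f {i}" by (rule sum.mono_neutral_right) (use that in auto)
    then show ?thesis by simp
  qed
  have "(x$i)^2 = 1" using u s1[of "\<lambda>k. (x$k)^2"] z by simp
  moreover have "rho lam x = lam i * (x$i)^2" unfolding rho_def using s1[of "\<lambda>k. lam k * (x$k)^2"] z by simp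
  ultimately have r: "rho lam x = lam i" by simp
  show ?thesis unfolding Sv_def using z r by (intro sum.neutral) auto
qed

lemma good_struct:
  fixes g :: "real^'n::finite"
  assumes u: "(\<Sum>k\<in>UNIV. (g$k)^2) = 1" and s2: "sup2 g" and sp: "Sv lam g > 0"
  obtains i j where "i \<noteq> j" "g$i \<noteq> 0" "g$j \<noteq> 0" "\<forall>k. k \<noteq> i \<and> k \<noteq> j \<longrightarrow> g$k = 0"
proof -
  obtain i where i: "g$i \<noteq> 0"
  proof (rule ccontr)
    assume "\<not> thesis"
    then have "\<forall>k. g$k = 0" using that by blast
    then show False using u by simp
  qed
  obtain j where j: "j \<noteq> i" "g$j \<noteq> 0"
  proof (rule ccontr)
    assume "\<not> thesis"
    then have "\<forall>k. k \<noteq> i \<longrightarrow> g$k = 0" using that by blast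
    then show False using single[OF u, of i lam] sp by simp
  qed
  have "\<forall>k. k \<noteq> i \<and> k \<noteq> j \<longrightarrow> g$k = 0"
    using s2 i j unfolding sup2_def by blast
  then show ?thesis using that[of i j] i j by auto
qed

lemma TT_good:
  fixes g :: "real^'n::finite"
  assumes u: "(\<Sum>k\<in>UNIV. (g$k)^2) = 1" and s2: "sup2 g" and sp: "Sv lam g > 0"
  shows "Tm lam (Tm lam g) = g"
proof -
  obtain i j where "i \<noteq> j" "\<forall>k. k \<noteq> i \<and> k \<noteq> j \<longrightarrow> g$k = 0"
    using good_struct[OF u s2 sp] by metis
  then show ?thesis using two_TT[OF u _ _ sp] by blast
qed

lemma isolation:
  fixes f :: "real^'n::finite"
  assumes u: "(\<Sum>k\<in>UNIV. (f$k)^2) = 1" and s2: "sup2 f" and sp: "Sv lam f > 0"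
  shows "\<exists>\<delta>>0. \<forall>g. (\<Sum>k\<in>UNIV. (g$k)^2) = 1 \<and> sup2 g \<and> Sv lam g = Sv lam f \<and> norm (g - f) < \<delta> \<longrightarrow> g = f"
proof -
  obtain i j where ij: "i \<noteq> j" "f$i \<noteq> 0" "f$j \<noteq> 0" and fz: "\<forall>k. k \<noteq> i \<and> k \<noteq> j \<longrightarrow> f$k = 0"
    using good_struct[OF u s2 sp] by metis
  define \<delta> where "\<delta> = (if \<bar>f$i\<bar> = \<bar>f$j\<bar> then min \<bar>f$i\<bar> \<bar>f$j\<bar> else min (min \<bar>f$i\<bar> \<bar>f$j\<bar>) \<bar>\<bar>f$i\<bar> - \<bar>f$j\<bar>\<bar>)"
  have d0: "\<delta> > 0" using ij by (auto simp: \<delta>_def)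
  have dle: "\<delta> \<le> \<bar>f$i\<bar>" "\<delta> \<le> \<bar>f$j\<bar>" "\<bar>f$i\<bar> \<noteq> \<bar>f$j\<bar> \<Longrightarrow> \<delta> \<le> \<bar>\<bar>f$i\<bar> - \<bar>f$j\<bar>\<bar>"
    unfolding \<delta>_def by (auto simp: min_le_iff_disj)
  have D: "lam j \<noteq> lam i" using sp two(3)[OF u ij(1) fz, of lam] by auto
  show ?thesis
  proof (intro exI[of _ \<delta>] conjI allI impI d0)
    fix g :: "real^'n" assume a: "(\<Sum>k\<in>UNIV. (g$k)^2) = 1 \<and> sup2 g \<and> Sv lam g = Sv lam f \<and> norm (g - f) < \<delta>"
    then have ug: "(\<Sum>k\<in>UNIV. (g$k)^2) = 1" and sg: "sup2 g" and eq: "Sv lam g = Sv lam f"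
      and cl: "\<And>k. \<bar>g$k - f$k\<bar> < \<delta>"
      using component_le_norm_cart[of "g - f"] by (auto intro: le_less_trans)
    have gi: "g$i \<noteq> 0" using cl[of i] dle(1) by auto
    have gj: "g$j \<noteq> 0" using cl[of j] dle(2) by auto
    have gz: "\<forall>k. k \<noteq> i \<and> k \<noteq> j \<longrightarrow> g$k = 0" using sg gi gj ij(1) unfolding sup2_def by blast
    have e1: "(g$i)^2 * (g$j)^2 = (f$i)^2 * (f$j)^2"
      using eq two(3)[OF ug ij(1) gz, of lam] two(3)[OF u ij(1) fz, of lam] D by simp
    have bg: "(g$j)^2 = 1 - (g$i)^2" using two(1)[OF ug ij(1) gz] by simp
    have bf: "(f$j)^2 = 1 - (f$i)^2" using two(1)[OF u ij(1) fz] by simp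
    have "((g$i)^2 - (f$i)^2) * (1 - (g$i)^2 - (f$i)^2) = 0" using e1 unfolding bg bf
      by (simp add: algebra_simps)
    then have cases: "(g$i)^2 = (f$i)^2 \<or> (g$i)^2 = (f$j)^2" using bf by auto
    have sq: "(g$i)^2 = (f$i)^2"
    proof (cases "(g$i)^2 = (f$i)^2")
      case False
      then have A: "(g$i)^2 = (f$j)^2" using cases by auto
      then have "\<bar>g$i\<bar> = \<bar>f$j\<bar>" by (metis abs_power2 power2_abs real_sqrt_abs)
      moreover have "\<bar>f$i\<bar> \<noteq> \<bar>f$j\<bar>" using False A by (metis power2_abs)
      moreover have "\<bar>\<bar>f$i\<bar> - \<bar>g$i\<bar>\<bar> \<le> \<bar>g$i - f$i\<bar>" by linarith
      ultimately show ?thesis using dle(3) cl[of i] by auto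
    qed
    have sqj: "(g$j)^2 = (f$j)^2" using sq bg bf by simp
    have fix1: "g$k = f$k" if "(g$k)^2 = (f$k)^2" "\<delta> \<le> \<bar>f$k\<bar>" for k
    proof -
      have "g$k = f$k \<or> g$k = - f$k" using that(1) by (metis power2_eq_iff)
      moreover have "g$k \<noteq> - f$k"
      proof
        assume "g$k = - f$k"
        then have "\<bar>g$k - f$k\<bar> = 2 * \<bar>f$k\<bar>" by simp
        then show False using cl[of k] that(2) by simp
      qed
      ultimately show ?thesis by blast
    qed
    show "g = f"
    proof (rule vec_eq_iff[THEN iffD2], rule allI)
      fix k show "g$k = f$k"
        using fix1[OF sq dle(1)] fix1[OF sqj dle(2)] gz fz by (cases "k = i \<or> k = j") auto
    qed
  qed
qed

lemma cont:
  fixes x :: "nat \<Rightarrow> real^'n::finite"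
  assumes lim: "x \<longlonglongrightarrow> g" and sp: "Sv lam g > 0"
  shows "(\<lambda>n. Sv lam (x n)) \<longlonglongrightarrow> Sv lam g" and "(\<lambda>n. Tm lam (x n)) \<longlonglongrightarrow> Tm lam g"
proof -
  have c: "(\<lambda>n. x n $ i) \<longlonglongrightarrow> g $ i" for i using lim by (rule tendsto_vec_nth)
  have r: "(\<lambda>n. rho lam (x n)) \<longlonglongrightarrow> rho lam g" unfolding rho_def
    by (intro tendsto_intros c)
  show "(\<lambda>n. Sv lam (x n)) \<longlonglongrightarrow> Sv lam g" unfolding Sv_def
    by (intro tendsto_intros c r)
  have w: "(\<lambda>n. Wv lam (x n)) \<longlonglongrightarrow> Wv lam g" unfolding Wv_def
    by (intro tendsto_intros c r)
  have nz: "norm (Wv lam g) \<noteq> 0" using normW[of lam g] sp by auto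
  show "(\<lambda>n. Tm lam (x n)) \<longlonglongrightarrow> Tm lam g" unfolding Tm_def
    by (intro tendsto_intros w nz)
qed

lemma freq_sub:
  assumes "\<forall>m. \<exists>n\<ge>m. P n"
  shows "\<exists>r::nat\<Rightarrow>nat. strict_mono r \<and> (\<forall>n. P (r n))"
proof -
  have "infinite {n. P n}" using assms by (simp add: infinite_nat_iff_unbounded_le)
  then show ?thesis using infinite_enumerate by blast
qed

lemma sub_conv:
  fixes y :: "nat \<Rightarrow> real^'n::finite"
  assumes "\<forall>n. norm (y n) \<le> 1"
  shows "\<exists>l r. strict_mono r \<and> (y \<circ> r) \<longlonglongrightarrow> l"
proof -
  have "seq_compact (cball (0::real^'n) 1)" by (rule compact_imp_seq_compact) simp
  moreover have "\<forall>n. y n \<in> cball 0 1" using assms by simp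
  ultimately show ?thesis by (metis seq_compactE)
qed

lemma Av:
  fixes lam :: "'n::finite \<Rightarrow> real"
  assumes "A = (\<chi> i j. if i = j then lam i else 0)"
  shows "A *v x = (\<chi> i. lam i * x$i)"
  unfolding assms by (simp add: matrix_vector_mult_def vec_eq_iff if_distrib[where f="\<lambda>a. a * _"] cong: if_cong)

lemma step_eq:
  fixes lam :: "'n::finite \<Rightarrow> real"
  assumes "A = (\<chi> i j. if i = j then lam i else 0)"
  shows "(let \<rho> = x \<bullet> (A *v x); w = A *v x - \<rho> *\<^sub>R x in w /\<^sub>R norm w) = Tm lam x"
proof -
  have r: "x \<bullet> (A *v x) = rho lam x"
    by (simp add: Av[OF assms] inner_vec_def rho_def power2_eq_square algebra_simps)
  have w: "A *v x - rho lam x *\<^sub>R x = Wv lam x"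
    by (simp add: Av[OF assms] Wv_def vec_eq_iff algebra_simps)
  show ?thesis unfolding Let_def r w Tm_def ..
qed

theorem theorem4p3:
  fixes lam :: "'n::{finite,linorder} \<Rightarrow> real"
    and A :: "real^'n::{finite,linorder}^'n::{finite,linorder}"
    and v :: "nat \<Rightarrow> real^'n::{finite,linorder}"
  assumes A_def: "A = (\<chi> i j. if i = j then lam i else 0)"
    and incr: "strict_mono lam"
    and unit: "norm (v 0) = 1"
    and grade: "grade A (v 0) \<ge> 2"
    and iter: "\<And>k. v (Suc k) =
       (let \<rho> = v k \<bullet> (A *v v k);
            w = A *v v k - \<rho> *\<^sub>R v k
        in w /\<^sub>R norm w)"
  shows "convergent (\<lambda>k. v (2 * k))"
proof -
  have vs: "v (Suc k) = Tm lam (v k)" for k using iter[of k] step_eq[OF A_def] by simp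
  have inj: "inj lam"
  proof (rule injI)
    fix a b assume "lam a = lam b"
    then show "a = b" using incr unfolding strict_mono_def
      by (metis less_irrefl linorder_neqE)
  qed
  have U0: "(\<Sum>k\<in>UNIV. (v 0 $ k)^2) = 1" using unit nsq[of "v 0"] by simp
  have S0: "Sv lam (v 0) > 0"
  proof (rule ccontr)
    assume "\<not> Sv lam (v 0) > 0"
    then have "Sv lam (v 0) = 0" using Sv_nonneg[of lam "v 0"] by simp
    then have "norm (Wv lam (v 0)) = 0" using normW[of lam "v 0"] by simp
    then have W0: "Wv lam (v 0) = 0" by simp
    have "A *v v 0 - rho lam (v 0) *\<^sub>R v 0 = Wv lam (v 0)"
      by (simp add: Av[OF A_def] Wv_def vec_eq_iff algebra_simps)
    then have E: "(((*v) A ^^ 1) (v 0)) + (\<Sum>i<1. (\<lambda>_. - rho lam (v 0)) i *\<^sub>R (((*v) A ^^ i) (v 0))) = 0"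
      using W0 by simp
    have "grade A (v 0) \<le> 1" unfolding grade_def
      apply (rule Least_le) apply (rule exI[of _ "\<lambda>_. - rho lam (v 0)"]) using E by simp
    then show False using grade by simp
  qed
  have inv: "(\<Sum>i\<in>UNIV. (v k $ i)^2) = 1 \<and> Sv lam (v k) \<ge> Sv lam (v 0)" for k
  proof (induction k)
    case 0 then show ?case using U0 by simp
  next
    case (Suc k)
    then have sp: "Sv lam (v k) > 0" using S0 by linarith
    have "(\<Sum>i\<in>UNIV. (v (Suc k) $ i)^2) = 1" using unitT[OF sp] nsq[of "v (Suc k)"] vs by simp
    moreover have "Sv lam (v (Suc k)) \<ge> Sv lam (v k)" using Sv_mono[OF _ sp] Suc vs by simp
    ultimately show ?case using Suc by simp
  qed
  have Uk: "\<And>k. (\<Sum>i\<in>UNIV. (v k $ i)^2) = 1" and Spos: "\<And>k. Sv lam (v k) > 0"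
    using inv S0 by (auto intro: less_le_trans)
  have nk: "norm (v k) = 1" for k
  proof -
    have "norm (v k) = sqrt (norm (v k)^2)" by simp
    then show ?thesis using Uk[of k] nsq[of "v k"] by simp
  qed
  have incs: "incseq (\<lambda>k. Sv lam (v k))"
    by (rule incseq_SucI) (use Sv_mono[OF Uk Spos] vs in simp)
  have bnd: "Sv lam (v k) \<le> (\<Sum>i\<in>UNIV. (lam i)^2)" for k
  proof -
    have "(\<Sum>i\<in>UNIV. (lam i - 0)^2 * (v k $ i)^2) = Sv lam (v k) + (rho lam (v k) - 0)^2"
      by (rule shift[OF Uk])
    moreover have "(\<Sum>i\<in>UNIV. (lam i - 0)^2 * (v k $ i)^2) \<le> (\<Sum>i\<in>UNIV. (lam i)^2)"
    proof (rule sum_mono)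
      fix i :: 'n
      have "(v k $ i)^2 \<le> (\<Sum>j\<in>UNIV. (v k $ j)^2)"
        by (rule member_le_sum) auto
      then have "(v k $ i)^2 \<le> 1" using Uk by simp
      then show "(lam i - 0)^2 * (v k $ i)^2 \<le> (lam i)^2"
        by (simp add: mult_left_le)
    qed
    moreover have "(rho lam (v k) - 0)^2 \<ge> 0" by simp
    ultimately show ?thesis by linarith
  qed
  obtain L where SL: "(\<lambda>k. Sv lam (v k)) \<longlonglongrightarrow> L" and SLle: "\<forall>k. Sv lam (v k) \<le> L"
    using incseq_convergent[OF incs] bnd by blast
  have L0: "L > 0" using SLle S0 by (meson less_le_trans)
  define u where "u = (\<lambda>k. v (2 * k))"
  have nu: "norm (u k) \<le> 1" for k using nk by (simp add: u_def)
  have uS: "u (Suc k) = Tm lam (Tm lam (u k))" for k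
    by (simp add: u_def vs[symmetric])
  (* limit points *)
  have LP: "(\<Sum>i\<in>UNIV. (g $ i)^2) = 1 \<and> sup2 g \<and> Sv lam g = L"
    if r: "strict_mono r" and lim: "(u \<circ> r) \<longlonglongrightarrow> g" for r g
  proof -
    have "(\<lambda>n. norm ((u \<circ> r) n)) \<longlonglongrightarrow> norm g" using lim by (rule tendsto_norm)
    moreover have "(\<lambda>n. norm ((u \<circ> r) n)) = (\<lambda>n. 1)" using nk by (simp add: u_def fun_eq_iff)
    ultimately have "(\<lambda>n. 1::real) \<longlonglongrightarrow> norm g" by simp
    then have "norm g = 1" by (simp add: LIMSEQ_const_iff)
    then have Ug: "(\<Sum>i\<in>UNIV. (g $ i)^2) = 1" using nsq[of g] by simp
    have sm1: "strict_mono (\<lambda>n. 2 * r n)" using r by (simp add: strict_mono_def)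
    have sm2: "strict_mono (\<lambda>n. Suc (2 * r n))" using r by (simp add: strict_mono_def)
    have a1: "(\<lambda>n. Sv lam (v (2 * r n))) \<longlonglongrightarrow> L"
      using LIMSEQ_subseq_LIMSEQ[OF SL sm1] by (simp add: comp_def)
    have a2: "(\<lambda>n. Sv lam (v (Suc (2 * r n)))) \<longlonglongrightarrow> L"
      using LIMSEQ_subseq_LIMSEQ[OF SL sm2] by (simp add: comp_def)
    have lim': "(\<lambda>n. v (2 * r n)) \<longlonglongrightarrow> g" using lim by (simp add: u_def comp_def)
    have gpos: "Sv lam g > 0"
    proof (rule ccontr)
      assume "\<not> Sv lam g > 0"
      then have "Sv lam g \<le> 0" by simp
      moreover have "(\<lambda>n. Sv lam (v (2 * r n))) \<longlonglongrightarrow> Sv lam g"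
      proof -
        have "(\<lambda>n. Sv lam (v (2 * r n))) \<longlonglongrightarrow> Sv lam g"
          unfolding Sv_def rho_def
          by (intro tendsto_intros tendsto_vec_nth lim')
        then show ?thesis .
      qed
      ultimately show False using LIMSEQ_unique[OF a1] L0 by fastforce
    qed
    have Sg: "Sv lam g = L" using cont(1)[OF lim' gpos] a1 LIMSEQ_unique by blast
    have "(\<lambda>n. Tm lam (v (2 * r n))) \<longlonglongrightarrow> Tm lam g" by (rule cont(2)[OF lim' gpos])
    then have lim2: "(\<lambda>n. v (Suc (2 * r n))) \<longlonglongrightarrow> Tm lam g" by (simp add: vs)
    have tpos: "Sv lam (Tm lam g) > 0" using Sv_mono[OF Ug gpos] gpos by simp
    have "Sv lam (Tm lam g) = L" using cont(1)[OF lim2 tpos] a2 LIMSEQ_unique by blast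
    then have "sup2 g" using eq_sup2[OF Ug gpos inj] Sg by simp
    then show ?thesis using Ug Sg by simp
  qed
  have subsub: "\<exists>g q. strict_mono q \<and> (u \<circ> q) \<longlonglongrightarrow> g \<and> (\<forall>n. P (q n))"
    if fr: "\<forall>m. \<exists>n\<ge>m. P n" for P
  proof -
    obtain r :: "nat \<Rightarrow> nat" where r: "strict_mono r" "\<forall>n. P (r n)" using freq_sub[OF fr] by blast
    obtain g r' where r': "strict_mono r'" "((u \<circ> r) \<circ> r') \<longlonglongrightarrow> g"
      using sub_conv[of "u \<circ> r"] nu by auto
    have "strict_mono (r \<circ> r')" using strict_mono_o[OF r(1) r'(1)] .
    moreover have "(u \<circ> (r \<circ> r')) \<longlonglongrightarrow> g" using r'(2) by (simp add: o_assoc)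
    moreover have "\<forall>n. P ((r \<circ> r') n)" using r(2) by simp
    ultimately show ?thesis by blast
  qed
  (* steps vanish *)
  have steps: "\<exists>N. \<forall>n\<ge>N. norm (u (Suc n) - u n) < e" if e0: "e > 0" for e
  proof (rule ccontr)
    assume "\<not> ?thesis"
    then have "\<forall>m. \<exists>n\<ge>m. e \<le> norm (u (Suc n) - u n)" by (auto simp: not_less)
    then obtain g q where q: "strict_mono q" "(u \<circ> q) \<longlonglongrightarrow> g" "\<forall>n. e \<le> norm (u (Suc (q n)) - u (q n))"
      using subsub[of "\<lambda>n. e \<le> norm (u (Suc n) - u n)"] by blast
    have G: "(\<Sum>i\<in>UNIV. (g $ i)^2) = 1" "sup2 g" "Sv lam g = L" using LP[OF q(1,2)] by auto
    have gp: "Sv lam g > 0" using G L0 by simp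
    have tp: "Sv lam (Tm lam g) > 0" using Sv_mono[OF G(1) gp] gp by simp
    have l0: "(\<lambda>n. u (q n)) \<longlonglongrightarrow> g" using q(2) by (simp add: comp_def)
    have l1: "(\<lambda>n. Tm lam (u (q n))) \<longlonglongrightarrow> Tm lam g" by (rule cont(2)[OF l0 gp])
    have l2: "(\<lambda>n. Tm lam (Tm lam (u (q n)))) \<longlonglongrightarrow> Tm lam (Tm lam g)" by (rule cont(2)[OF l1 tp])
    then have "(\<lambda>n. u (Suc (q n))) \<longlonglongrightarrow> g" using TT_good[OF G(1) G(2) gp] uS by simp
    then have "(\<lambda>n. norm (u (Suc (q n)) - u (q n))) \<longlonglongrightarrow> norm (g - g)"
      by (intro tendsto_intros l0)
    then have "e \<le> norm (g - g)" using q(3) by (intro LIMSEQ_le_const) auto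
    then show False using e0 by simp
  qed
  (* a limit point *)
  obtain f r0 where r0: "strict_mono r0" "(u \<circ> r0) \<longlonglongrightarrow> f"
    using sub_conv[of u] nu by blast
  have F: "(\<Sum>i\<in>UNIV. (f $ i)^2) = 1" "sup2 f" "Sv lam f = L" using LP[OF r0] by auto
  have fp: "Sv lam f > 0" using F L0 by simp
  obtain \<delta> where d0: "\<delta> > 0" and iso: "\<And>g. (\<Sum>i\<in>UNIV. (g $ i)^2) = 1 \<Longrightarrow> sup2 g \<Longrightarrow> Sv lam g = Sv lam f \<Longrightarrow> norm (g - f) < \<delta> \<Longrightarrow> g = f"
    using isolation[OF F(1) F(2) fp] by blast
  have "u \<longlonglongrightarrow> f"
  proof (rule LIMSEQ_I)
    fix \<epsilon> :: real assume ep: "\<epsilon> > 0"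
    define e where "e = min \<epsilon> (\<delta>/2)"
    have e0: "e > 0" using ep d0 by (simp add: e_def)
    obtain N1 where N1: "\<forall>n\<ge>N1. norm (u (Suc n) - u n) < e/2" using steps[of "e/2"] e0 by auto
    have "\<exists>N. \<forall>n\<ge>N. \<not> (e/2 \<le> norm (u n - f) \<and> norm (u n - f) \<le> e)"
    proof (rule ccontr)
      assume "\<not> ?thesis"
      then have "\<forall>m. \<exists>n\<ge>m. e/2 \<le> norm (u n - f) \<and> norm (u n - f) \<le> e" by auto
      then obtain g q where q: "strict_mono q" "(u \<circ> q) \<longlonglongrightarrow> g"
          "\<forall>n. e/2 \<le> norm (u (q n) - f) \<and> norm (u (q n) - f) \<le> e"
        using subsub[of "\<lambda>n. e/2 \<le> norm (u n - f) \<and> norm (u n - f) \<le> e"] by blast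
      have G: "(\<Sum>i\<in>UNIV. (g $ i)^2) = 1" "sup2 g" "Sv lam g = L" using LP[OF q(1,2)] by auto
      have l0: "(\<lambda>n. u (q n)) \<longlonglongrightarrow> g" using q(2) by (simp add: comp_def)
      have ln: "(\<lambda>n. norm (u (q n) - f)) \<longlonglongrightarrow> norm (g - f)" by (intro tendsto_intros l0)
      have lo: "e/2 \<le> norm (g - f)" using q(3) by (intro LIMSEQ_le_const[OF ln]) auto
      have hi: "norm (g - f) \<le> e" using q(3) by (intro LIMSEQ_le_const2[OF ln]) auto
      have "norm (g - f) < \<delta>" using hi d0 by (simp add: e_def)
      then have "g = f" using iso[OF G(1) G(2)] G(3) F(3) by simp
      then show False using lo e0 by simp
    qed
    then obtain N2 where N2: "\<forall>n\<ge>N2. \<not> (e/2 \<le> norm (u n - f) \<and> norm (u n - f) \<le> e)" by blast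
    have "(\<lambda>n. u (r0 n)) \<longlonglongrightarrow> f" using r0(2) by (simp add: comp_def)
    then obtain n0 where n0: "\<forall>n\<ge>n0. norm (u (r0 n) - f) < e/2"
      using LIMSEQ_D[of "\<lambda>n. u (r0 n)" f "e/2"] e0 by auto
    define M where "M = r0 (max n0 (max N1 N2))"
    have M: "M \<ge> N1" "M \<ge> N2" "norm (u M - f) < e/2"
      using seq_suble[OF r0(1), of "max n0 (max N1 N2)"] n0 by (auto simp: M_def)
    have all: "norm (u (M + k) - f) < e/2" for k
    proof (induction k)
      case 0 then show ?case using M by simp
    next
      case (Suc k)
      have "norm (u (Suc (M + k)) - f) \<le> norm (u (Suc (M + k)) - u (M + k)) + norm (u (M + k) - f)"
        by (rule order_trans[OF _ norm_triangle_ineq]) simp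
      also have "\<dots> < e/2 + e/2" proof -
        have "norm (u (Suc (M + k)) - u (M + k)) < e/2" using N1 M(1) by simp
        then show ?thesis using Suc by linarith
      qed
      also have "\<dots> = e" by simp
      finally have "norm (u (Suc (M + k)) - f) < e" .
      moreover have "Suc (M + k) \<ge> N2" using M by simp
      ultimately show ?case using N2 by fastforce
    qed
    show "\<exists>no. \<forall>n\<ge>no. norm (u n - f) < \<epsilon>"
    proof (intro exI allI impI)
      fix n assume "n \<ge> M"
      then have "norm (u n - f) < e/2" using all[of "n - M"] by simp
      then show "norm (u n - f) < \<epsilon>" using e0 by (simp add: e_def)
    qed
  qed
  then show ?thesis unfolding u_def convergent_def by blast
qed

end
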